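(* Let $\lambda=(\lambda_1,\dots,\lambda_n)$ be a partition with $\lambda_n\ne0$, let $k$ be an integer with $0\le k\le\lambda_n$, and let $x=(x_1,\dots,x_n)\in\mathbb{C}^n$. Then $$W_{\lambda}(x;q,p,t,a,b)=\prod_{j=1}^{\lfloor n/2\rfloor}\frac{(qbt^{n-2j})_{2k}}{(qbt^{-1-n+2j})_{2k}}\prod_{i=1}^n\frac{(x_i^{-1})_k(ax_i)_k}{(qbx_i)_k(qb/(ax_i))_k}\;W_{\lambda-k^n}(xq^{-k};q,p,t,aq^{2k},bq^{2k}),$$ where $\lambda-k^n=(\lambda_1-k,\dots,\lambda_n-k)$ and $xq^{-k}=(x_1q^{-k},\dots,x_nq^{-k})$.
   Context: Fix $|p|<1$; parameters generic. $E(x)=(x;p)_\infty(p/x;p)_\infty$. For integer $m\ge0$, $(a)_m=\prod_{k=0}^{m-1}E(aq^k)$, for $m<0$, $(a)_m=1/(aq^m)_{-m}$; for a partition $\lambda$ with $n$ parts $(a)_\lambda=\prod_{i=1}^n(at^{1-i})_{\lambda_i}$; several arguments denote products; integer subscripts denote the single-integer symbol. For $n$-part partitions with $\lambda_1\ge\mu_1\ge\dots\ge\lambda_n\ge\mu_n$, $\lambda_{n+1}=\mu_{n+1}=0$, $H_{\lambda/\mu}(q,p,t,b)=\prod_{1\le i<j\le n}\Big\{\frac{(q^{\mu_i-\mu_{j-1}}t^{j-i})_{\mu_{j-1}-\lambda_j}(q^{\lambda_i+\lambda_j}t^{3-j-i}b)_{\mu_{j-1}-\lambda_j}}{(q^{\mu_i-\mu_{j-1}+1}t^{j-i-1})_{\mu_{j-1}-\lambda_j}(q^{\lambda_i+\lambda_j+1}t^{2-j-i}b)_{\mu_{j-1}-\lambda_j}}\frac{(q^{\lambda_i-\mu_{j-1}+1}t^{j-i-1})_{\mu_{j-1}-\lambda_j}}{(q^{\lambda_i-\mu_{j-1}}t^{j-i})_{\mu_{j-1}-\lambda_j}}\Big\}\prod_{1\le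 i<j-1\le n}\frac{(q^{\mu_i+\lambda_j+1}t^{1-j-i}b)_{\mu_{j-1}-\lambda_j}}{(q^{\mu_i+\lambda_j}t^{2-j-i}b)_{\mu_{j-1}-\lambda_j}}$; for $x\in\mathbb{C}$, $W_{\lambda/\mu}(x;q,p,t,a,b)=H_{\lambda/\mu}\frac{(x^{-1},ax)_\lambda(qbx/t,qb/(axt))_\mu}{(x^{-1},ax)_\mu(qbx,qb/(ax))_\lambda}\prod_{i=1}^n\frac{E(bt^{1-2i}q^{2\mu_i})}{E(bt^{1-2i})}\frac{(bt^{1-2i})_{\mu_i+\lambda_{i+1}}}{(bqt^{-2i})_{\mu_i+\lambda_{i+1}}}t^{i(\mu_i-\lambda_{i+1})}$ (zero if the interlacing fails); recursively $W_{\lambda/\mu}(y,z_1,\dots,z_\ell;q,p,t,a,b)=\sum_\nu W_{\lambda/\nu}(yt^{-\ell};q,p,t,at^{2\ell},bt^\ell)W_{\nu/\mu}(z_1,\dots,z_\ell;q,p,t,a,b)$ over $\nu$ with $\lambda_1\ge\nu_1\ge\dots\ge\lambda_n\ge\nu_n\ge0$; $W_\lambda=W_{\lambda/0}$. *)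

theory Defs
  imports "HOL-Analysis.Analysis"
begin

definition qpinf :: "complex \<Rightarrow> complex \<Rightarrow> complex" where
  "qpinf p x = prodinf (\<lambda>k. 1 - x * p ^ k)"

definition E :: "complex \<Rightarrow> complex \<Rightarrow> complex" where
  "E p x = qpinf p x * qpinf p (p / x)"

definition thpoch :: "complex \<Rightarrow> complex \<Rightarrow> complex \<Rightarrow> int \<Rightarrow> complex" where
  "thpoch p q a m =
     (if m \<ge> 0 then (\<Prod>k<nat m. E p (a * q ^ k))
      else 1 / (\<Prod>k<nat (- m). E p (a * q powi m * q ^ k)))"

text \<open>Partitions with n parts are lists of length n (entries lam!0 = lambda_1, ...).
  part lam i = lambda_i for 1 <= i <= n and 0 otherwise (so lambda_{n+1} = 0).\<close>
definition part :: "nat list \<Rightarrow> nat \<Rightarrow> int" where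
  "part lam i = (if 1 \<le> i \<and> i \<le> length lam then int (lam ! (i - 1)) else 0)"

definition ppoch :: "complex \<Rightarrow> complex \<Rightarrow> complex \<Rightarrow> complex \<Rightarrow> nat list \<Rightarrow> complex" where
  "ppoch p q t a lam = (\<Prod>i\<in>{1..length lam}. thpoch p q (a * t powi (1 - int i)) (part lam i))"

definition interlace :: "nat list \<Rightarrow> nat list \<Rightarrow> bool" where
  "interlace lam mu \<longleftrightarrow> length mu = length lam \<and>
     (\<forall>i\<in>{1..length lam}. part mu i \<le> part lam i \<and> part lam (i + 1) \<le> part mu i)"

definition Hfac :: "complex \<Rightarrow> complex \<Rightarrow> complex \<Rightarrow> complex \<Rightarrow> nat list \<Rightarrow> nat list \<Rightarrow> complex" where
  "Hfac q p t b lam mu =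
    (let n = length lam; L = part lam; M = part mu in
     (\<Prod>j\<in>{2..n}. \<Prod>i\<in>{1..<j}.
        (let m = M (j - 1) - L j in
          thpoch p q (q powi (M i - M (j - 1)) * t powi (int j - int i)) m
          * thpoch p q (q powi (L i + L j) * t powi (3 - int j - int i) * b) m
          / (thpoch p q (q powi (M i - M (j - 1) + 1) * t powi (int j - int i - 1)) m
             * thpoch p q (q powi (L i + L j + 1) * t powi (2 - int j - int i) * b) m)
          * thpoch p q (q powi (L i - M (j - 1) + 1) * t powi (int j - int i - 1)) m
          / thpoch p q (q powi (L i - M (j - 1)) * t powi (int j - int i)) m))
     * (\<Prod>j\<in>{3..n + 1}. \<Prod>i\<in>{1..<j - 1}.
        (let m = M (j - 1) - L j in
          thpoch p q (q powi (M i + L j + 1) * t powi (1 - int j - int i) * b) m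
          / thpoch p q (q powi (M i + L j) * t powi (2 - int j - int i) * b) m)))"

definition W1 :: "complex \<Rightarrow> complex \<Rightarrow> complex \<Rightarrow> complex \<Rightarrow> complex \<Rightarrow> complex
                  \<Rightarrow> nat list \<Rightarrow> nat list \<Rightarrow> complex" where
  "W1 x q p t a b lam mu =
    (if interlace lam mu then
       Hfac q p t b lam mu
       * (ppoch p q t (1 / x) lam * ppoch p q t (a * x) lam
          * ppoch p q t (q * b * x / t) mu * ppoch p q t (q * b / (a * x * t)) mu)
       / (ppoch p q t (1 / x) mu * ppoch p q t (a * x) mu
          * ppoch p q t (q * b * x) lam * ppoch p q t (q * b / (a * x)) lam)
       * (\<Prod>i\<in>{1..length lam}.
            E p (b * t powi (1 - 2 * int i) * q powi (2 * part mu i)) / E p (b * t powi (1 - 2 * int i))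
            * thpoch p q (b * t powi (1 - 2 * int i)) (part mu i + part lam (i + 1))
            / thpoch p q (b * q * t powi (- 2 * int i)) (part mu i + part lam (i + 1))
            * t powi (int i * (part mu i - part lam (i + 1))))
     else 0)"

fun Wm :: "complex list \<Rightarrow> complex \<Rightarrow> complex \<Rightarrow> complex \<Rightarrow> complex \<Rightarrow> complex
           \<Rightarrow> nat list \<Rightarrow> nat list \<Rightarrow> complex" where
  "Wm [] q p t a b lam mu = 0"
| "Wm [y] q p t a b lam mu = W1 y q p t a b lam mu"
| "Wm (y # z # zs) q p t a b lam mu =
     (let l = length (z # zs) in
      \<Sum>\<nu>\<in>{\<nu>. interlace lam \<nu>}.
        W1 (y * t powi (- int l)) q p t (a * t ^ (2 * l)) (b * t ^ l) lam \<nu>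
        * Wm (z # zs) q p t a b \<nu> mu)"

definition W :: "complex list \<Rightarrow> complex \<Rightarrow> complex \<Rightarrow> complex \<Rightarrow> complex \<Rightarrow> complex
                 \<Rightarrow> nat list \<Rightarrow> complex" where
  "W xs q p t a b lam = Wm xs q p t a b lam (replicate (length lam) 0)"

definition generic :: "complex \<Rightarrow> complex \<Rightarrow> complex \<Rightarrow> complex \<Rightarrow> complex \<Rightarrow> complex list \<Rightarrow> bool" where
  "generic p q t a b xs \<longleftrightarrow> q \<noteq> 0 \<and> t \<noteq> 0 \<and> a \<noteq> 0 \<and> b \<noteq> 0 \<and> (\<forall>x\<in>set xs. x \<noteq> 0) \<and>
     (\<forall>(i::int) (j::int) (k::int) (l::int) (r::int list). length r = length xs \<longrightarrow>
        (i, j, k, l, r) \<noteq> (0, 0, 0, 0, replicate (length xs) 0) \<longrightarrow>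
        E p (q powi i * t powi j * a powi k * b powi l * (\<Prod>m<length xs. (xs ! m) powi (r ! m))) \<noteq> 0)"

end

theory Submission
  imports Defs
begin

lemma thpoch_nat: "thpoch p q a (int m) = (\<Prod>j<m. E p (a * q ^ j))"
  by (simp add: thpoch_def)

lemma thpoch_0[simp]: "thpoch p q a 0 = 1"
  by (simp add: thpoch_def)

lemma thpoch_add_nat:
  "thpoch p q a (int m + int n) = thpoch p q a (int m) * thpoch p q (a * q ^ m) (int n)"
proof (induction n)
  case 0 then show ?case by simp
next
  case (Suc n)
  have "thpoch p q a (int m + int (Suc n)) = thpoch p q a (int (m + n)) * E p (a * q ^ (m + n))"
    by (simp only: of_nat_add[symmetric] thpoch_nat add_Suc_right prod.lessThan_Suc)
  also have "\<dots> = thpoch p q a (int m) * thpoch p q (a * q ^ m) (int n) * E p (a * q ^ (m + n))"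
    using Suc by simp
  also have "\<dots> = thpoch p q a (int m) * thpoch p q (a * q ^ m) (int (Suc n))"
  proof -
    have "thpoch p q (a*q^m) (int (Suc n)) = thpoch p q (a*q^m) (int n) * E p (a*q^m*q^n)"
      by (simp only: thpoch_nat prod.lessThan_Suc)
    then show ?thesis by (simp add: power_add mult_ac)
  qed
  finally show ?case .
qed

lemma thpoch_add:
  assumes "m \<ge> 0" "n \<ge> 0"
  shows "thpoch p q a (m + n) = thpoch p q a m * thpoch p q (a * q powi m) n"
  using thpoch_add_nat[of p q a "nat m" "nat n"] assms
  by (simp add: power_int_nonneg_exp)

lemma thpoch_nz:
  assumes "\<And>j::nat. E p (a * q ^ j) \<noteq> 0" "m \<ge> 0"
  shows "thpoch p q a m \<noteq> 0"
  using assms by (simp add: thpoch_def)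

lemma thpoch_1[simp]: "thpoch p q c 1 = E p c"
  using thpoch_nat[of p q c 1] by simp

lemma E_ratio:
  assumes "E p c \<noteq> 0"
  shows "E p (c * q ^ (2*k)) / E p c * thpoch p q c (2 * int k)
       = thpoch p q (c * q) (2 * int k)"
proof -
  have "thpoch p q c (int 1 + int (2*k)) = E p c * thpoch p q (c*q) (int (2*k))"
    by (subst thpoch_add_nat) (simp add: thpoch_nat)
  moreover have "thpoch p q c (int (2*k) + int 1) = thpoch p q c (int (2*k)) * E p (c * q ^ (2*k))"
    by (subst thpoch_add_nat) (simp add: thpoch_nat)
  ultimately have "E p c * thpoch p q (c*q) (int (2*k)) = thpoch p q c (int (2*k)) * E p (c * q ^ (2*k))"
    by (simp add: add.commute)
  then show ?thesis using assms by (simp add: field_simps)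
qed

definition sh :: "nat \<Rightarrow> nat \<Rightarrow> nat list \<Rightarrow> nat list" where
  "sh k m lam = map (\<lambda>i. if i < m then lam ! i + k else lam ! i) [0..<length lam]"

lemma length_sh[simp]: "length (sh k m lam) = length lam"
  by (simp add: sh_def)

lemma part_sh:
  assumes "m \<le> length lam"
  shows "part (sh k m lam) i = (if 1 \<le> i \<and> i \<le> m then part lam i + int k else part lam i)"
  using assms by (auto simp: part_def sh_def)

lemma part_nonneg: "part lam i \<ge> 0"
  by (simp add: part_def)

lemma part_replicate0[simp]: "part (replicate n 0) i = 0"
  by (auto simp: part_def)

lemma interlace_length: "interlace lam nu \<Longrightarrow> length nu = length lam"
  by (simp add: interlace_def)

lemma finite_interlace: "finite {nu. interlace lam nu}"
proof -
  have "{nu. interlace lam nu} \<subseteq> {nu. set nu \<subseteq> {0..Max (insert 0 (set lam))} \<and> length nu = length lam}"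
  proof (clarify)
    fix nu assume il: "interlace lam nu"
    then have len: "length nu = length lam" by (simp add: interlace_def)
    have "nu ! j \<le> Max (insert 0 (set lam))" if "j < length nu" for j
    proof -
      have "part nu (Suc j) \<le> part lam (Suc j)" using il that len by (auto simp: interlace_def)
      then have "nu ! j \<le> lam ! j" using that len by (simp add: part_def)
      also have "lam ! j \<le> Max (insert 0 (set lam))" using that len by (simp add: Max_ge_iff)
      finally show ?thesis .
    qed
    then show "set nu \<subseteq> {0..Max (insert 0 (set lam))} \<and> length nu = length lam"
      using len by (auto simp: in_set_conv_nth)
  qed
  moreover have "finite {nu. set nu \<subseteq> {0..Max (insert 0 (set lam))} \<and> length nu = length lam}"
    by (rule finite_lists_length_eq) simp
  ultimately show ?thesis by (rule finite_subset)
qed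

lemma powi_shift2: "(q::complex) \<noteq> 0 \<Longrightarrow> q powi (x + 2 * int k) = q powi x * q ^ (2*k)"
proof -
  assume q: "q \<noteq> 0"
  show ?thesis using power_int_add[of q x "int (2*k)"] q by (simp add: power_int_mult power_mult)
qed

lemma Hfac_sh:
  assumes m1: "m \<ge> 1" and mn: "m \<le> length lam" and len: "length nu = length lam"
    and sl: "\<forall>i>m. part lam i = 0" and sn: "\<forall>i\<ge>m. part nu i = 0" and q0: "q \<noteq> 0"
  shows "Hfac q p t b (sh k m lam) (sh k (m-1) nu) = Hfac q p t (b*q^(2*k)) lam nu"
proof -
  let ?n = "length lam"
  let ?L = "part lam" and ?M = "part nu"
  have PL: "part (sh k m lam) i = (if 1 \<le> i \<and> i \<le> m then ?L i + int k else ?L i)" for i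
    using part_sh[OF mn] .
  have PM: "part (sh k (m - Suc 0) nu) i = (if 1 \<le> i \<and> i \<le> m - Suc 0 then ?M i + int k else ?M i)" for i
    using part_sh[of "m-1" nu k] mn len by simp
  have e1: "q powi (a + int k + (c + int k)) * tt * b = q powi (a + c) * tt * (b * q^(2*k))" for a c tt
  proof -
    have "a + int k + (c + int k) = (a + c) + 2 * int k" by simp
    then have "q powi (a + int k + (c + int k)) = q powi (a+c) * q^(2*k)" by (simp only: powi_shift2[OF q0])
    then show ?thesis by (simp only:) (simp add: mult_ac)
  qed
  have e2: "q powi (a + int k + (c + int k) + 1) * tt * b = q powi (a + c + 1) * tt * (b * q^(2*k))" for a c tt
  proof -
    have "a + int k + (c + int k) + 1 = (a + c + 1) + 2 * int k" by simp
    then have "q powi (a + int k + (c + int k) + 1) = q powi (a+c+1) * q^(2*k)" by (simp only: powi_shift2[OF q0])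
    then show ?thesis by (simp only:) (simp add: mult_ac)
  qed
  have A: "(\<Prod>i\<in>{1..<j}.
        (let mm = part (sh k (m-1) nu) (j - 1) - part (sh k m lam) j in
          thpoch p q (q powi (part (sh k (m-1) nu) i - part (sh k (m-1) nu) (j - 1)) * t powi (int j - int i)) mm
          * thpoch p q (q powi (part (sh k m lam) i + part (sh k m lam) j) * t powi (3 - int j - int i) * b) mm
          / (thpoch p q (q powi (part (sh k (m-1) nu) i - part (sh k (m-1) nu) (j - 1) + 1) * t powi (int j - int i - 1)) mm
             * thpoch p q (q powi (part (sh k m lam) i + part (sh k m lam) j + 1) * t powi (2 - int j - int i) * b) mm)
          * thpoch p q (q powi (part (sh k m lam) i - part (sh k (m-1) nu) (j - 1) + 1) * t powi (int j - int i - 1)) mm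
          / thpoch p q (q powi (part (sh k m lam) i - part (sh k (m-1) nu) (j - 1)) * t powi (int j - int i)) mm))
     = (\<Prod>i\<in>{1..<j}.
        (let mm = ?M (j - 1) - ?L j in
          thpoch p q (q powi (?M i - ?M (j - 1)) * t powi (int j - int i)) mm
          * thpoch p q (q powi (?L i + ?L j) * t powi (3 - int j - int i) * (b*q^(2*k))) mm
          / (thpoch p q (q powi (?M i - ?M (j - 1) + 1) * t powi (int j - int i - 1)) mm
             * thpoch p q (q powi (?L i + ?L j + 1) * t powi (2 - int j - int i) * (b*q^(2*k))) mm)
          * thpoch p q (q powi (?L i - ?M (j - 1) + 1) * t powi (int j - int i - 1)) mm
          / thpoch p q (q powi (?L i - ?M (j - 1)) * t powi (int j - int i)) mm))"
    if j: "j \<in> {2..?n}" for j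
  apply (rule prod.cong[OF refl])
  subgoal premises i for i
    proof (cases "j \<le> m")
      case True
      then have "part (sh k (m-1) nu) i = ?M i + int k" "part (sh k (m-1) nu) (j-1) = ?M (j-1) + int k"
        "part (sh k m lam) i = ?L i + int k" "part (sh k m lam) j = ?L j + int k"
        using i j by (auto simp: PL PM)
      note eqs = this
      show ?thesis by (simp only: eqs e1 e2) (simp add: Let_def)
    next
      case False
      then have "part (sh k (m-1) nu) (j-1) = 0" "part (sh k m lam) j = 0" "?M (j-1) = 0" "?L j = 0"
        using i j sl sn by (auto simp: PL PM)
      then show ?thesis by (simp add: Let_def)
    qed
  done
  have B: "(\<Prod>i\<in>{1..<j - 1}.
        (let mm = part (sh k (m-1) nu) (j - 1) - part (sh k m lam) j in
          thpoch p q (q powi (part (sh k (m-1) nu) i + part (sh k m lam) j + 1) * t powi (1 - int j - int i) * b) mm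
          / thpoch p q (q powi (part (sh k (m-1) nu) i + part (sh k m lam) j) * t powi (2 - int j - int i) * b) mm))
     = (\<Prod>i\<in>{1..<j - 1}.
        (let mm = ?M (j - 1) - ?L j in
          thpoch p q (q powi (?M i + ?L j + 1) * t powi (1 - int j - int i) * (b*q^(2*k))) mm
          / thpoch p q (q powi (?M i + ?L j) * t powi (2 - int j - int i) * (b*q^(2*k))) mm))"
    if j: "j \<in> {3..?n+1}" for j
  apply (rule prod.cong[OF refl])
  subgoal premises i for i
    proof (cases "j \<le> m")
      case True
      then have "part (sh k (m-1) nu) i = ?M i + int k" "part (sh k (m-1) nu) (j-1) = ?M (j-1) + int k"
        "part (sh k m lam) j = ?L j + int k"
        using i j by (auto simp: PL PM)
      note eqs = this
      show ?thesis by (simp only: eqs e1 e2) (simp add: Let_def)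
    next
      case False
      then have "part (sh k (m-1) nu) (j-1) = 0" "part (sh k m lam) j = 0" "?M (j-1) = 0" "?L j = 0"
        using i j sl sn by (auto simp: PL PM)
      then show ?thesis by (simp add: Let_def)
    qed
  done
  show ?thesis
    unfolding Hfac_def Let_def[of "length _"] Let_def[of "part _"] length_sh
    apply (rule arg_cong2[where f="(*)"])
     apply (rule prod.cong[OF refl], erule A)
    apply (rule prod.cong[OF refl], erule B)
    done
qed

lemma ppoch_sh:
  assumes mn: "m \<le> length lam" and sl: "\<forall>i>m. part lam i = 0" and q0: "q \<noteq> 0"
    and cc: "c * q ^ k = c'"
  shows "ppoch p q t c (sh k m lam) = (\<Prod>i\<in>{1..m}. thpoch p q (c * t powi (1 - int i)) (int k)) * ppoch p q t c' lam"
proof -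
  have PL: "part (sh k m lam) i = (if 1 \<le> i \<and> i \<le> m then part lam i + int k else part lam i)" for i
    using part_sh[OF mn] .
  have f: "thpoch p q (c * t powi (1 - int i)) (part (sh k m lam) i)
      = (if i \<le> m then thpoch p q (c * t powi (1 - int i)) (int k) else 1) * thpoch p q (c' * t powi (1 - int i)) (part lam i)"
    if i: "i \<in> {1..length lam}" for i
  proof (cases "i \<le> m")
    case True
    have "part (sh k m lam) i = int k + part lam i" using True i PL by simp
    then have "thpoch p q (c * t powi (1 - int i)) (part (sh k m lam) i) = thpoch p q (c * t powi (1 - int i)) (int k + part lam i)"
      by simp
    also have "\<dots> = thpoch p q (c * t powi (1 - int i)) (int k) * thpoch p q (c * t powi (1 - int i) * q powi (int k)) (part lam i)"
      by (rule thpoch_add) (auto simp: part_nonneg)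
    also have "c * t powi (1 - int i) * q powi (int k) = c' * t powi (1 - int i)"
      using cc by (simp add: mult_ac)
    finally show ?thesis using True by simp
  next
    case False
    then show ?thesis using sl PL by simp
  qed
  have "ppoch p q t c (sh k m lam) = (\<Prod>i\<in>{1..length lam}. (if i \<le> m then thpoch p q (c * t powi (1 - int i)) (int k) else 1) * thpoch p q (c' * t powi (1 - int i)) (part lam i))"
    unfolding ppoch_def length_sh using f by (rule prod.cong[OF refl])
  also have "\<dots> = (\<Prod>i\<in>{1..length lam}. (if i \<le> m then thpoch p q (c * t powi (1 - int i)) (int k) else 1)) * ppoch p q t c' lam"
    unfolding ppoch_def by (rule prod.distrib)
  also have "(\<Prod>i\<in>{1..length lam}. (if i \<le> m then thpoch p q (c * t powi (1 - int i)) (int k) else 1))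
      = (\<Prod>i\<in>{x \<in> {1..length lam}. x \<le> m}. thpoch p q (c * t powi (1 - int i)) (int k))"
    by (rule prod.inter_filter[symmetric]) simp
  also have "{x \<in> {1..length lam}. x \<le> m} = {1..m}" using mn by auto
  finally show ?thesis .
qed

lemma thnz:
  assumes H: "\<And>s r. E p (c * t powi s * q powi r) \<noteq> 0" and q0: "q \<noteq> 0"
    and d: "d = c * t powi s * q powi r" and m: "m \<ge> 0"
  shows "thpoch p q d m \<noteq> 0"
proof (rule thpoch_nz[OF _ m])
  fix j :: nat
  have "d * q ^ j = c * t powi s * q powi (r + int j)"
    using d q0 by (simp add: power_int_add mult_ac)
  then show "E p (d * q ^ j) \<noteq> 0" using H by simp
qed

lemma interlace_sh:
  assumes m1: "m \<ge> 1" and mn: "m \<le> length lam" and len: "length nu = length lam"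
    and sl: "\<forall>i>m. part lam i = 0" and sn: "\<forall>i\<ge>m. part nu i = 0"
  shows "interlace (sh k m lam) (sh k (m-1) nu) \<longleftrightarrow> interlace lam nu"
proof -
  have PL: "part (sh k m lam) i = (if 1 \<le> i \<and> i \<le> m then part lam i + int k else part lam i)" for i
    using part_sh[OF mn] .
  have PM: "part (sh k (m - Suc 0) nu) i = (if 1 \<le> i \<and> i \<le> m - Suc 0 then part nu i + int k else part nu i)" for i
    using part_sh[of "m-1" nu k] mn len by simp
  have "(part (sh k (m-1) nu) i \<le> part (sh k m lam) i \<and> part (sh k m lam) (i + 1) \<le> part (sh k (m-1) nu) i)
      \<longleftrightarrow> (part nu i \<le> part lam i \<and> part lam (i + 1) \<le> part nu i)" if i: "i \<in> {1..length lam}" for i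
  proof (cases "i < m")
    case True
    then have "i \<le> m - Suc 0" by simp
    then show ?thesis using i True by (simp add: PL PM)
  next
    case False
    then have "part nu i = 0" "part lam (i+1) = 0" using sl sn by auto
    moreover have "\<not> (1 \<le> i \<and> i \<le> m - 1)" "\<not> (1 \<le> i + 1 \<and> i + 1 \<le> m)" using False by auto
    ultimately show ?thesis using i part_nonneg[of lam i] by (simp add: PL PM)
  qed
  then show ?thesis unfolding interlace_def using len by simp
qed

definition EF :: "complex \<Rightarrow> complex \<Rightarrow> complex \<Rightarrow> complex \<Rightarrow> nat list \<Rightarrow> nat list \<Rightarrow> nat \<Rightarrow> complex" where
  "EF p q t b lam mu i = E p (b * t powi (1 - 2 * int i) * q powi (2 * part mu i)) / E p (b * t powi (1 - 2 * int i))
            * thpoch p q (b * t powi (1 - 2 * int i)) (part mu i + part lam (i + 1))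
            / thpoch p q (b * q * t powi (- 2 * int i)) (part mu i + part lam (i + 1))
            * t powi (int i * (part mu i - part lam (i + 1)))"

definition Bf :: "complex \<Rightarrow> complex \<Rightarrow> complex \<Rightarrow> complex \<Rightarrow> nat \<Rightarrow> nat \<Rightarrow> complex" where
  "Bf p q t b k l = (\<Prod>i\<in>{1..l}. thpoch p q (q * b * t powi (1 - 2 * int i)) (2 * int k)
                                 / thpoch p q (q * b * t powi (- 2 * int i)) (2 * int k))"

lemma factor_alg:
  fixes XX Ec Ec' A B C D F T :: complex
  assumes "Ec' \<noteq> 0" "Ec' / Ec * A = B"
  shows "XX / Ec * (A * C) / (D * F) * T = (B / D) * (XX / Ec' * C / F * T)"
proof -
  have "XX / Ec * (A * C) / (D * F) * T = XX / Ec' * (Ec' / Ec * A) * C / (D * F) * T"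
    using assms(1) by (simp add: field_simps)
  also have "\<dots> = XX / Ec' * B * C / (D * F) * T" using assms(2) by simp
  also have "\<dots> = (B / D) * (XX / Ec' * C / F * T)"
    by (simp add: divide_inverse inverse_mult_distrib mult_ac)
  finally show ?thesis .
qed

lemma EP_sh:
  assumes mn: "Suc l \<le> length lam" and len: "length nu = length lam"
    and sl: "\<forall>i>Suc l. part lam i = 0" and sn: "\<forall>i\<ge>Suc l. part nu i = 0" and q0: "q \<noteq> 0" and t0: "t \<noteq> 0"
    and nzb: "\<And>s r. E p (b * t powi s * q powi r) \<noteq> 0"
  shows "(\<Prod>i\<in>{1..length lam}. EF p q t b (sh k (Suc l) lam) (sh k l nu) i)
       = Bf p q t b k l * (\<Prod>i\<in>{1..length lam}. EF p q t (b * q ^ (2*k)) lam nu i)"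
proof -
  have PL: "part (sh k (Suc l) lam) i = (if 1 \<le> i \<and> i \<le> Suc l then part lam i + int k else part lam i)" for i
    using part_sh[OF mn] .
  have PM: "part (sh k l nu) i = (if 1 \<le> i \<and> i \<le> l then part nu i + int k else part nu i)" for i
    using part_sh[of l nu k] mn len by simp
  have Enz: "E p (b * t powi s * q ^ j) \<noteq> 0" for s j
    using nzb[of s "int j"] by simp
  have fac: "EF p q t b (sh k (Suc l) lam) (sh k l nu) i
      = (if i \<le> l then thpoch p q (q * b * t powi (1 - 2 * int i)) (2 * int k)
                        / thpoch p q (q * b * t powi (- 2 * int i)) (2 * int k) else 1)
        * EF p q t (b * q ^ (2*k)) lam nu i" if i: "i \<in> {1..length lam}" for i
  proof (cases "i \<le> l")
    case True
    define M where "M = part nu i"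
    define L where "L = part lam (i+1)"
    define c where "c = b * t powi (1 - 2 * int i)"
    define d where "d = b * q * t powi (- 2 * int i)"
    define c' where "c' = b * q ^ (2*k) * t powi (1 - 2 * int i)"
    define d' where "d' = b * q ^ (2*k) * q * t powi (- 2 * int i)"
    have M0: "M \<ge> 0" "L \<ge> 0" unfolding M_def L_def by (simp_all add: part_nonneg)
    have p1: "part (sh k l nu) i = M + int k" "part (sh k (Suc l) lam) (i+1) = L + int k"
      using True i by (simp_all add: PL PM M_def L_def)
    have cc': "c * q ^ (2*k) = c'" unfolding c_def c'_def by (simp add: mult_ac)
    have th1: "thpoch p q c (M + int k + (L + int k)) = thpoch p q c (2 * int k) * thpoch p q c' (M + L)"
    proof -
      have "thpoch p q c (2 * int k + (M + L)) = thpoch p q c (2 * int k) * thpoch p q (c * q powi (2 * int k)) (M + L)"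
        by (rule thpoch_add) (use M0 in auto)
      moreover have "c * q powi (2 * int k) = c'" using cc' by (simp add: power_int_mult power_mult)
      ultimately show ?thesis by (simp add: algebra_simps)
    qed
    have th2: "thpoch p q d (M + int k + (L + int k)) = thpoch p q d (2 * int k) * thpoch p q d' (M + L)"
    proof -
      have "thpoch p q d (2 * int k + (M + L)) = thpoch p q d (2 * int k) * thpoch p q (d * q powi (2 * int k)) (M + L)"
        by (rule thpoch_add) (use M0 in auto)
      moreover have "d * q powi (2 * int k) = d'" unfolding d_def d'_def by (simp add: power_int_mult power_mult mult_ac)
      ultimately show ?thesis by (simp add: algebra_simps)
    qed
    have X: "c * q powi (2 * (M + int k)) = c' * q powi (2 * M)"
    proof -
      have "q powi (2 * (M + int k)) = q powi (2 * M) * q powi (2 * int k)"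
        using q0 by (simp add: power_int_add distrib_left)
      then show ?thesis unfolding c_def c'_def by (simp add: power_int_mult power_mult mult_ac)
    qed
    have Ec': "E p c' \<noteq> 0" unfolding c'_def using Enz[of "1 - 2 * int i" "2*k"] by (simp add: mult_ac)
    have Ec: "E p c \<noteq> 0" unfolding c_def using Enz[of "1 - 2 * int i" 0] by simp
    have rat: "E p c' / E p c * thpoch p q c (2 * int k) = thpoch p q (q * b * t powi (1 - 2 * int i)) (2 * int k)"
      using E_ratio[OF Ec, of q k] cc' unfolding c_def by (simp add: mult_ac)
    have "EF p q t b (sh k (Suc l) lam) (sh k l nu) i
        = E p (c * q powi (2 * (M + int k))) / E p c * (thpoch p q c (2 * int k) * thpoch p q c' (M + L))
          / (thpoch p q d (2 * int k) * thpoch p q d' (M + L)) * t powi (int i * (M - L))"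
      unfolding EF_def p1 th1[symmetric] th2[symmetric] c_def[symmetric] d_def[symmetric] by simp
    also have "\<dots> = (thpoch p q (q * b * t powi (1 - 2 * int i)) (2 * int k) / thpoch p q d (2 * int k))
        * (E p (c' * q powi (2 * M)) / E p c' * thpoch p q c' (M + L) / thpoch p q d' (M + L) * t powi (int i * (M - L)))"
      unfolding X by (rule factor_alg[OF Ec' rat])
    also have "\<dots> = (thpoch p q (q * b * t powi (1 - 2 * int i)) (2 * int k)
                        / thpoch p q (q * b * t powi (- 2 * int i)) (2 * int k))
        * EF p q t (b * q ^ (2*k)) lam nu i"
      unfolding EF_def c'_def d'_def d_def M_def L_def by (simp add: mult_ac)
    finally show ?thesis using True by simp
  next
    case False
    then have z: "part (sh k l nu) i = 0" "part (sh k (Suc l) lam) (i+1) = 0" "part nu i = 0" "part lam (i+1) = 0"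
      using sl sn by (auto simp: PL PM)
    have "E p (b * t powi (1 - 2 * int i)) \<noteq> 0" using Enz[of _ 0] by simp
    moreover have "E p (b * q ^ (2 * k) * t powi (1 - 2 * int i)) \<noteq> 0"
      using Enz[of "1 - 2 * int i" "2*k"] by (simp add: mult_ac)
    ultimately show ?thesis using False unfolding EF_def z by simp
  qed
  have "(\<Prod>i\<in>{1..length lam}. EF p q t b (sh k (Suc l) lam) (sh k l nu) i)
      = (\<Prod>i\<in>{1..length lam}. (if i \<le> l then thpoch p q (q * b * t powi (1 - 2 * int i)) (2 * int k)
                        / thpoch p q (q * b * t powi (- 2 * int i)) (2 * int k) else 1)
        * EF p q t (b * q ^ (2*k)) lam nu i)"
    using fac by (rule prod.cong[OF refl])
  also have "\<dots> = (\<Prod>i\<in>{1..length lam}. (if i \<le> l then thpoch p q (q * b * t powi (1 - 2 * int i)) (2 * int k)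
                        / thpoch p q (q * b * t powi (- 2 * int i)) (2 * int k) else 1))
        * (\<Prod>i\<in>{1..length lam}. EF p q t (b * q ^ (2*k)) lam nu i)"
    by (rule prod.distrib)
  also have "(\<Prod>i\<in>{1..length lam}. (if i \<le> l then thpoch p q (q * b * t powi (1 - 2 * int i)) (2 * int k)
                        / thpoch p q (q * b * t powi (- 2 * int i)) (2 * int k) else 1))
      = (\<Prod>i\<in>{x\<in>{1..length lam}. x \<le> l}. thpoch p q (q * b * t powi (1 - 2 * int i)) (2 * int k)
                        / thpoch p q (q * b * t powi (- 2 * int i)) (2 * int k))"
    by (rule prod.inter_filter[symmetric]) simp
  also have "{x\<in>{1..length lam}. x \<le> l} = {1..l}" using mn by auto
  finally show ?thesis unfolding Bf_def .
qed

lemma W1_EF: "W1 x q p t a b lam mu =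
    (if interlace lam mu then
       Hfac q p t b lam mu
       * (ppoch p q t (1 / x) lam * ppoch p q t (a * x) lam
          * ppoch p q t (q * b * x / t) mu * ppoch p q t (q * b / (a * x * t)) mu)
       / (ppoch p q t (1 / x) mu * ppoch p q t (a * x) mu
          * ppoch p q t (q * b * x) lam * ppoch p q t (q * b / (a * x)) lam)
       * (\<Prod>i\<in>{1..length lam}. EF p q t b lam mu i)
     else 0)"
  by (simp add: W1_def EF_def)

definition Xf :: "complex \<Rightarrow> complex \<Rightarrow> complex \<Rightarrow> complex \<Rightarrow> complex \<Rightarrow> nat \<Rightarrow> complex \<Rightarrow> nat \<Rightarrow> complex" where
  "Xf p q t a b k x l = thpoch p q (1 / x * t powi (- int l)) (int k) * thpoch p q (a * x * t powi (- int l)) (int k)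
     / (thpoch p q (q * b * x) (int k) * thpoch p q (q * b / (a * x)) (int k))"

lemma rearr:
  fixes h p1 p2 p3 p4 n1 n2 n3 n4 d1 d2 d3 d4 e1 e2 e3 e4 B R :: complex
  shows "h * (p1 * n1 * (p2 * n2) * (p3 * n3) * (p4 * n4)) / (d1 * e1 * (d2 * e2) * (d3 * e3) * (d4 * e4)) * (B * R)
    = (p1 * p2 * p3 * p4) / (d1 * d2 * d3 * d4) * B * (h * (n1 * n2 * n3 * n4) / (e1 * e2 * e3 * e4) * R)"
  by (simp add: divide_inverse inverse_mult_distrib mult_ac)

lemma pre_alg:
  fixes A1 A2 A3 A4 u1 u2 v3 v4 :: complex
  assumes "A1 \<noteq> 0" "A2 \<noteq> 0" "A3 \<noteq> 0" "A4 \<noteq> 0"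
  shows "(A1*u1)*(A2*u2)*A3*A4 / (A1*A2*(v3 * A3)*(v4 * A4)) = u1*u2/(v3* v4)"
proof (cases "v3 * v4 = 0")
  case True
  then show ?thesis by auto
next
  case False
  then show ?thesis using assms by (simp add: field_simps)
qed

lemma prod_first:
  "(\<Prod>i\<in>{1..Suc l}. f i) = f 1 * (\<Prod>i\<in>{1..l}. f (Suc i))"
  by (simp add: prod.atLeast_Suc_atMost prod.shift_bounds_cl_Suc_ivl[symmetric] mult_ac)

lemma KS:
  fixes l :: nat
  assumes mn: "Suc l \<le> length lam" and len: "length nu = length lam"
    and sl: "\<forall>i>Suc l. part lam i = 0" and sn: "\<forall>i\<ge>Suc l. part nu i = 0"
    and q0: "q \<noteq> 0" and t0: "t \<noteq> 0" and a0: "a \<noteq> 0" and x0: "x \<noteq> 0"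
    and nzb: "\<And>s r. E p (b * t powi s * q powi r) \<noteq> 0"
    and nz1: "\<And>s r. E p (1 / x * t powi s * q powi r) \<noteq> 0"
    and nz2: "\<And>s r. E p (a * x * t powi s * q powi r) \<noteq> 0"
    and nz3: "\<And>s r. E p (b * x * t powi s * q powi r) \<noteq> 0"
    and nz4: "\<And>s r. E p (b / (a * x) * t powi s * q powi r) \<noteq> 0"
  shows "W1 x q p t a b (sh k (Suc l) lam) (sh k l nu)
       = Xf p q t a b k x l * Bf p q t b k l
         * W1 (x * q powi - int k) q p t (a * q ^ (2*k)) (b * q ^ (2*k)) lam nu"
proof (cases "interlace lam nu")
  case False
  then have "\<not> interlace (sh k (Suc l) lam) (sh k l nu)"
    using interlace_sh[of "Suc l" lam nu k] mn len sl sn by simp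
  then show ?thesis using False by (simp add: W1_EF)
next
  case True
  have il: "interlace (sh k (Suc l) lam) (sh k l nu)"
    using interlace_sh[of "Suc l" lam nu k] mn len sl sn True by simp
  have sn': "\<forall>i>l. part nu i = 0" using sn by auto
  have ln: "l \<le> length nu" using mn len by simp
  have qk: "q powi - int k = 1 / q ^ k" by (simp add: power_int_minus_divide)
  have q2: "q ^ (2*k) = q^k * q^k" by (simp add: power_add[symmetric] mult_2)
  let ?P = "\<lambda>c m. (\<Prod>i\<in>{1..m}. thpoch p q (c * t powi (1 - int i)) (int k))"
  have n1: "ppoch p q t (1 / x) (sh k (Suc l) lam) = ?P (1/x) (Suc l) * ppoch p q t (1 / (x * q powi - int k)) lam"
    by (rule ppoch_sh[OF mn sl q0]) (simp add: qk)
  have n2: "ppoch p q t (a * x) (sh k (Suc l) lam) = ?P (a*x) (Suc l) * ppoch p q t (a * q ^ (2*k) * (x * q powi - int k)) lam"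
    by (rule ppoch_sh[OF mn sl q0]) (simp add: qk q2)
  have n3: "ppoch p q t (q * b * x / t) (sh k l nu) = ?P (q * b * x / t) l * ppoch p q t (q * (b * q ^ (2*k)) * (x * q powi - int k) / t) nu"
    by (rule ppoch_sh[OF ln sn' q0]) (simp add: qk q2)
  have n4: "ppoch p q t (q * b / (a * x * t)) (sh k l nu) = ?P (q * b / (a * x * t)) l
       * ppoch p q t (q * (b * q ^ (2*k)) / (a * q ^ (2*k) * (x * q powi - int k) * t)) nu"
    by (rule ppoch_sh[OF ln sn' q0]) (simp add: qk q2 mult_ac)
  have d1: "ppoch p q t (1 / x) (sh k l nu) = ?P (1/x) l * ppoch p q t (1 / (x * q powi - int k)) nu"
    by (rule ppoch_sh[OF ln sn' q0]) (simp add: qk)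
  have d2: "ppoch p q t (a * x) (sh k l nu) = ?P (a*x) l * ppoch p q t (a * q ^ (2*k) * (x * q powi - int k)) nu"
    by (rule ppoch_sh[OF ln sn' q0]) (simp add: qk q2)
  have d3: "ppoch p q t (q * b * x) (sh k (Suc l) lam) = ?P (q * b * x) (Suc l) * ppoch p q t (q * (b * q ^ (2*k)) * (x * q powi - int k)) lam"
    by (rule ppoch_sh[OF mn sl q0]) (simp add: qk q2)
  have d4: "ppoch p q t (q * b / (a * x)) (sh k (Suc l) lam) = ?P (q * b / (a * x)) (Suc l)
       * ppoch p q t (q * (b * q ^ (2*k)) / (a * q ^ (2*k) * (x * q powi - int k))) lam"
    by (rule ppoch_sh[OF mn sl q0]) (simp add: qk q2)
  have H: "Hfac q p t b (sh k (Suc l) lam) (sh k l nu) = Hfac q p t (b * q ^ (2*k)) lam nu"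
    using Hfac_sh[where m="Suc l" and lam=lam and nu=nu and k=k and q=q and p=p and t=t and b=b] mn len sl sn q0 by simp
  have EP: "(\<Prod>i\<in>{1..length lam}. EF p q t b (sh k (Suc l) lam) (sh k l nu) i)
       = Bf p q t b k l * (\<Prod>i\<in>{1..length lam}. EF p q t (b * q ^ (2*k)) lam nu i)"
    by (rule EP_sh[OF mn len sl sn q0 t0 nzb])
  have tsh: "t powi (1 - int (Suc i)) = t powi (- int i)" for i by simp
  have t1: "c / t * t powi (1 - int i) = c * t powi (- int i)" for c i
  proof -
    have "t powi (1 - int i) = t * t powi (- int i)" using t0 power_int_add[of t 1 "- int i"] by simp
    then show ?thesis using t0 by simp
  qed
  have P3: "?P (q * b * x) (Suc l) = thpoch p q (q * b * x) (int k) * ?P (q * b * x / t) l"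
    unfolding prod_first tsh t1 by simp
  have P4: "?P (q * b / (a * x)) (Suc l) = thpoch p q (q * b / (a * x)) (int k) * ?P (q * b / (a * x * t)) l"
  proof -
    have "q * b / (a * x * t) = (q * b / (a * x)) / t" by simp
    then show ?thesis unfolding prod_first tsh by (simp only: t1) simp
  qed
  have P1: "?P (1/x) (Suc l) = ?P (1/x) l * thpoch p q (1 / x * t powi (- int l)) (int k)"
    by simp
  have P2: "?P (a*x) (Suc l) = ?P (a*x) l * thpoch p q (a * x * t powi (- int l)) (int k)"
    by simp
  have nzP1: "?P (1/x) l \<noteq> 0"
  proof -
    have "thpoch p q (1/x * t powi (1 - int i)) (int k) \<noteq> 0" for i
      by (rule thnz[OF nz1 q0, where s="1 - int i" and r=0]) auto
    then show ?thesis by (simp only: prod_zero_iff finite_atLeastAtMost) blast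
  qed
  have nzP2: "?P (a*x) l \<noteq> 0"
  proof -
    have "thpoch p q (a*x * t powi (1 - int i)) (int k) \<noteq> 0" for i
      by (rule thnz[OF nz2 q0, where s="1 - int i" and r=0]) auto
    then show ?thesis by (simp only: prod_zero_iff finite_atLeastAtMost) blast
  qed
  have nzP3: "?P (q * b * x / t) l \<noteq> 0"
  proof -
    have "thpoch p q (q * b * x / t * t powi (1 - int i)) (int k) \<noteq> 0" for i
      unfolding t1 by (rule thnz[OF nz3 q0, where s="- int i" and r=1]) (auto simp: mult_ac)
    then show ?thesis by (simp only: prod_zero_iff finite_atLeastAtMost) blast
  qed
  have nzP4: "?P (q * b / (a * x * t)) l \<noteq> 0"
  proof -
    have "thpoch p q (q * b / (a * x) / t * t powi (1 - int i)) (int k) \<noteq> 0" for i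
      unfolding t1 by (rule thnz[OF nz4 q0, where s="- int i" and r=1]) (auto simp: mult_ac)
    note th4 = this
    have eq: "q * b / (a * x * t) = (q * b / (a * x)) / t" by simp
    show ?thesis unfolding eq by (simp only: prod_zero_iff finite_atLeastAtMost) (use th4 in blast)
  qed
  have pre: "?P (1/x) (Suc l) * ?P (a*x) (Suc l) * ?P (q * b * x / t) l * ?P (q * b / (a * x * t)) l
      / (?P (1/x) l * ?P (a*x) l * ?P (q * b * x) (Suc l) * ?P (q * b / (a * x)) (Suc l)) = Xf p q t a b k x l"
    unfolding P1 P2 P3 P4 Xf_def by (rule pre_alg[OF nzP1 nzP2 nzP3 nzP4])
  show ?thesis
    apply (simp only: W1_EF if_P[OF il] if_P[OF True] length_sh)
    apply (simp only: H n1 n2 n3 n4 d1 d2 d3 d4 EP)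
    apply (simp only: rearr pre)
    done
qed

definition Xy :: "complex \<Rightarrow> complex \<Rightarrow> complex \<Rightarrow> complex \<Rightarrow> nat \<Rightarrow> complex \<Rightarrow> complex" where
  "Xy p q a b k y = thpoch p q (1 / y) (int k) * thpoch p q (a * y) (int k)
     / (thpoch p q (q * b * y) (int k) * thpoch p q (q * b / (a * y)) (int k))"

definition gy :: "complex \<Rightarrow> complex \<Rightarrow> complex \<Rightarrow> complex \<Rightarrow> complex \<Rightarrow> complex \<Rightarrow> bool" where
  "gy p q t a b y \<longleftrightarrow> y \<noteq> 0 \<and> (\<forall>s r. E p (1 / y * t powi s * q powi r) \<noteq> 0 \<and> E p (a * y * t powi s * q powi r) \<noteq> 0
       \<and> E p (b * y * t powi s * q powi r) \<noteq> 0 \<and> E p (b / (a * y) * t powi s * q powi r) \<noteq> 0)"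

lemma tpow_l: "(t::complex) \<noteq> 0 \<Longrightarrow> t ^ l = t powi int l" by simp

lemma KS':
  fixes l :: nat
  assumes mn: "Suc l \<le> length lam" and len: "length nu = length lam"
    and sl: "\<forall>i>Suc l. part lam i = 0" and sn: "\<forall>i\<ge>Suc l. part nu i = 0"
    and q0: "q \<noteq> 0" and t0: "t \<noteq> 0" and a0: "a \<noteq> 0"
    and nzb: "\<And>s r. E p (b * t powi s * q powi r) \<noteq> 0"
    and g: "gy p q t a b y"
  shows "W1 (y * t powi - int l) q p t (a * t ^ (2 * l)) (b * t ^ l) (sh k (Suc l) lam) (sh k l nu)
       = Xy p q a b k y * Bf p q t (b * t ^ l) k l
         * W1 (y * q powi - int k * t powi - int l) q p t (a * q ^ (2*k) * t ^ (2 * l)) (b * q ^ (2*k) * t ^ l) lam nu"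
proof -
  have y0: "y \<noteq> 0" using g by (simp add: gy_def)
  have t2: "t ^ (l * 2) = t ^ l * t ^ l" "t ^ (2 * l) = t ^ l * t ^ l" by (simp_all add: power_add[symmetric] mult_2 mult_2_right)
  have tt: "t powi (- int l) * t ^ l = 1" using t0 by (simp add: power_int_minus_divide)
  have tadd: "t powi u * t powi v = t powi (u + v)" for u v using t0 by (simp add: power_int_add)
  let ?x = "y * t powi - int l"
  have x0: "?x \<noteq> 0" using y0 t0 by simp
  have a'0: "a * t ^ (2 * l) \<noteq> 0" using a0 t0 by simp
  have nzb': "E p (b * t ^ l * t powi s * q powi r) \<noteq> 0" for s r
  proof -
    have "t powi (int l + s) = t^l * t powi s" using power_int_add[of t "int l" s] t0 by simp
    then have eq: "b * t ^ l * t powi s * q powi r = b * t powi (int l + s) * q powi r"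
      by (simp add: mult_ac)
    show ?thesis by (simp only: eq) (rule nzb)
  qed
  have nz1: "E p (1 / ?x * t powi s * q powi r) \<noteq> 0" for s r
  proof -
    have eq: "1 / ?x * t powi s * q powi r = 1 / y * t powi (int l + s) * q powi r"
      using t0 y0 by (simp add: power_int_add power_int_minus_divide field_simps)
    show ?thesis using g unfolding gy_def eq by blast
  qed
  have nz2: "E p (a * t ^ (2 * l) * ?x * t powi s * q powi r) \<noteq> 0" for s r
  proof -
    have eq: "a * t ^ (2 * l) * ?x * t powi s * q powi r = a * y * t powi (int l + s) * q powi r"
      using t0 y0 by (simp add: power_int_add power_int_minus_divide field_simps t2)
    show ?thesis using g unfolding gy_def eq by blast
  qed
  have nz3: "E p (b * t ^ l * ?x * t powi s * q powi r) \<noteq> 0" for s r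
  proof -
    have eq: "b * t ^ l * ?x * t powi s * q powi r = b * y * t powi s * q powi r"
      using t0 y0 by (simp add: power_int_minus_divide field_simps)
    show ?thesis using g unfolding gy_def eq by blast
  qed
  have nz4: "E p (b * t ^ l / (a * t ^ (2 * l) * ?x) * t powi s * q powi r) \<noteq> 0" for s r
  proof -
    have eq: "b * t ^ l / (a * t ^ (2 * l) * ?x) * t powi s * q powi r = b / (a * y) * t powi s * q powi r"
      using t0 y0 a0 by (simp add: power_int_minus_divide field_simps t2)
    show ?thesis using g unfolding gy_def eq by blast
  qed
  have K: "W1 ?x q p t (a * t ^ (2 * l)) (b * t ^ l) (sh k (Suc l) lam) (sh k l nu)
       = Xf p q t (a * t ^ (2 * l)) (b * t ^ l) k ?x l * Bf p q t (b * t ^ l) k l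
         * W1 (?x * q powi - int k) q p t (a * t ^ (2 * l) * q ^ (2*k)) (b * t ^ l * q ^ (2*k)) lam nu"
    by (rule KS[OF mn len sl sn q0 t0 a'0 x0 nzb' nz1 nz2 nz3 nz4])
  have XX: "Xf p q t (a * t ^ (2 * l)) (b * t ^ l) k ?x l = Xy p q a b k y"
  proof -
    have e1: "1 / ?x * t powi (- int l) = 1 / y" using t0 y0 by (simp add: power_int_minus_divide field_simps)
    have e2: "a * t ^ (2 * l) * ?x * t powi (- int l) = a * y"
      using t0 y0 by (simp add: power_int_minus_divide field_simps t2)
    have e3: "q * (b * t ^ l) * ?x = q * b * y" using t0 y0 by (simp add: power_int_minus_divide field_simps)
    have e4: "q * (b * t ^ l) / (a * t ^ (2 * l) * ?x) = q * b / (a * y)"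
      using t0 y0 a0 by (simp add: power_int_minus_divide field_simps t2)
    show ?thesis unfolding Xf_def Xy_def e1 e2 e3 e4 ..
  qed
  show ?thesis unfolding K XX by (simp add: mult_ac)
qed

lemma sh_0[simp]: "sh k 0 lam = lam"
  unfolding sh_def by (simp add: map_nth)

lemma Wm_support:
  "Wm zs q p t a b nu (replicate n 0) \<noteq> 0 \<Longrightarrow> zs \<noteq> [] \<Longrightarrow> \<forall>i > length zs. part nu i = 0"
proof (induction zs arbitrary: nu)
  case Nil then show ?case by simp
next
  case (Cons y zs)
  show ?case
  proof (cases zs)
    case Nil
    then have il: "interlace nu (replicate n 0)" using Cons.prems by (auto simp: W1_def split: if_splits)
    show ?thesis
    proof (intro allI impI)
      fix i assume i: "i > length (y # zs)"
      show "part nu i = 0"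
      proof (cases "i \<le> length nu")
        case True
        then have "part nu (i - 1 + 1) \<le> part (replicate n 0) (i - 1)"
          using il i Nil unfolding interlace_def by (metis One_nat_def Suc_pred' atLeastAtMost_iff length_Cons list.size(3) not_less_eq_eq not_less_zero  zero_less_diff le_simps(3) le_trans less_imp_le_nat )
        then show ?thesis using i Nil part_nonneg[of nu i] by simp
      next
        case False then show ?thesis by (simp add: part_def)
      qed
    qed
  next
    case (Cons z zs')
    obtain nu' where il: "interlace nu nu'" and nz: "Wm (z # zs') q p t a b nu' (replicate n 0) \<noteq> 0"
      using Cons.prems \<open>zs = z # zs'\<close> apply (simp add: Let_def)
      by (metis (no_types, lifting) mem_Collect_eq mult_zero_right sum.neutral)
    have IH: "\<forall>i > length zs. part nu' i = 0" using Cons.IH[OF nz[folded \<open>zs = z # zs'\<close>]] \<open>zs = z # zs'\<close> by simp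
    show ?thesis
    proof (intro allI impI)
      fix i assume i: "i > length (y # zs)"
      show "part nu i = 0"
      proof (cases "i \<le> length nu")
        case True
        have m: "i - 1 \<in> {1..length nu}" using True i by auto
        have "part nu (i - 1 + 1) \<le> part nu' (i - 1)" using il m unfolding interlace_def by blast
        then show ?thesis using i IH part_nonneg[of nu i] by simp
      next
        case False then show ?thesis by (simp add: part_def)
      qed
    qed
  qed
qed

lemma inj_sh: "inj (sh k m)"
proof (rule injI)
  fix x y assume e: "sh k m x = sh k m y"
  then have len: "length x = length y" using length_sh by metis
  have "x ! i = y ! i" if "i < length x" for i
  proof -
    have "sh k m x ! i = sh k m y ! i" using e by simp
    then show ?thesis using that len by (simp add: sh_def split: if_splits)
  qed
  then show "x = y" using len by (simp add: list_eq_iff_nth_eq)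
qed

definition unsh :: "nat \<Rightarrow> nat \<Rightarrow> nat list \<Rightarrow> nat list" where
  "unsh k m nu = map (\<lambda>i. if i < m then nu ! i - k else nu ! i) [0..<length nu]"

lemma sh_unsh: "(\<And>i. i < m \<Longrightarrow> i < length nu \<Longrightarrow> nu ! i \<ge> k) \<Longrightarrow> sh k m (unsh k m nu) = nu"
proof -
  assume h: "\<And>i. i < m \<Longrightarrow> i < length nu \<Longrightarrow> nu ! i \<ge> k"
  show ?thesis
  proof (rule nth_equalityI)
    show "length (sh k m (unsh k m nu)) = length nu" by (simp add: unsh_def)
    fix i assume "i < length (sh k m (unsh k m nu))"
    then have i: "i < length nu" by (simp add: unsh_def)
    show "sh k m (unsh k m nu) ! i = nu ! i"
      using h[of i] i by (simp add: sh_def unsh_def)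
  qed
qed

lemma part_unsh: "i > m \<Longrightarrow> part (unsh k m nu) i = part nu i"
  by (auto simp: part_def unsh_def)

lemma chain:
  assumes "zs \<noteq> []" "length zs \<le> length lam" "\<forall>i>length zs. part lam i = 0"
    and q0: "q \<noteq> 0" and t0: "t \<noteq> 0" and a0: "a \<noteq> 0"
    and nzb: "\<And>s r. E p (b * t powi s * q powi r) \<noteq> 0"
    and g: "\<forall>y\<in>set zs. gy p q t a b y"
  shows "Wm zs q p t a b (sh k (length zs) lam) (replicate (length lam) 0)
    = (\<Prod>i<length zs. Xy p q a b k (zs ! i)) * (\<Prod>j<length zs. Bf p q t (b * t ^ j) k j)
      * Wm (map (\<lambda>x. x * q powi - int k) zs) q p t (a * q ^ (2*k)) (b * q ^ (2*k)) lam (replicate (length lam) 0)"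
  using assms(1-3) g
proof (induction zs arbitrary: lam)
  case Nil then show ?case by simp
next
  case (Cons y zs)
  have gy: "gy p q t a b y" using Cons.prems by simp
  show ?case
  proof (cases zs)
    case Nil
    have mn: "Suc 0 \<le> length lam" using Cons.prems Nil by simp
    have "W1 (y * t powi - int 0) q p t (a * t ^ (2 * 0)) (b * t ^ 0) (sh k (Suc 0) lam) (sh k 0 (replicate (length lam) 0))
       = Xy p q a b k y * Bf p q t (b * t ^ 0) k 0
         * W1 (y * q powi - int k * t powi - int 0) q p t (a * q ^ (2*k) * t ^ (2 * 0)) (b * q ^ (2*k) * t ^ 0) lam (replicate (length lam) 0)"
      by (rule KS'[OF mn _ _ _ q0 t0 a0 nzb gy]) (use Cons.prems Nil in auto)
    then show ?thesis using Nil by simp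
  next
    case (Cons z zs')
    note zs = this
    define l where "l = length zs"
    have lz: "length (z # zs') = l" using zs l_def by simp
    have mn: "Suc l \<le> length lam" using Cons.prems(2) l_def by simp
    have sl: "\<forall>i>Suc l. part lam i = 0" using Cons.prems(3) l_def by simp
    let ?n = "length lam"
    let ?z = "replicate ?n 0"
    let ?f = "\<lambda>x. x * q powi - int k"
    define F where "F nu = W1 (y * t powi - int l) q p t (a * t ^ (2 * l)) (b * t ^ l) (sh k (Suc l) lam) nu
                          * Wm (z # zs') q p t a b nu ?z" for nu
    define G where "G mu = W1 (?f y * t powi - int l) q p t (a * q ^ (2*k) * t ^ (2 * l)) (b * q ^ (2*k) * t ^ l) lam mu
                          * Wm (map ?f (z # zs')) q p t (a * q ^ (2*k)) (b * q ^ (2*k)) mu ?z" for mu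
    define S where "S = {mu. interlace lam mu \<and> (\<forall>i>l. part mu i = 0)}"
    define C where "C = (\<Prod>i<l. Xy p q a b k (zs ! i)) * (\<Prod>j<l. Bf p q t (b * t ^ j) k j)"
    have LHS: "Wm (y # zs) q p t a b (sh k (length (y # zs)) lam) ?z = (\<Sum>nu\<in>{nu. interlace (sh k (Suc l) lam) nu}. F nu)"
      unfolding F_def using zs lz l_def by (simp add: Let_def)
    have RHS: "Wm (map ?f (y # zs)) q p t (a * q ^ (2*k)) (b * q ^ (2*k)) lam ?z = (\<Sum>mu\<in>{mu. interlace lam mu}. G mu)"
      unfolding G_def using zs lz l_def by (simp add: Let_def)
    have S_sub: "S \<subseteq> {mu. interlace lam mu}" unfolding S_def by auto
    have IH: "Wm (z # zs') q p t a b (sh k l mu) ?z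
       = C * Wm (map ?f (z # zs')) q p t (a * q ^ (2*k)) (b * q ^ (2*k)) mu ?z" if mu: "mu \<in> S" for mu
    proof -
      have len: "length mu = ?n" using mu unfolding S_def by (auto dest: interlace_length)
      have "Wm zs q p t a b (sh k (length zs) mu) (replicate (length mu) 0)
        = (\<Prod>i<length zs. Xy p q a b k (zs ! i)) * (\<Prod>j<length zs. Bf p q t (b * t ^ j) k j)
          * Wm (map ?f zs) q p t (a * q ^ (2*k)) (b * q ^ (2*k)) mu (replicate (length mu) 0)"
        using Cons.IH[of mu] mu Cons.prems len l_def zs unfolding S_def by simp
      then show ?thesis using len l_def zs unfolding C_def by simp
    qed
    have termeq: "F (sh k l mu) = (Xy p q a b k y * Bf p q t (b * t ^ l) k l * C) * G mu" if mu: "mu \<in> S" for mu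
    proof -
      have len: "length mu = ?n" using mu unfolding S_def by (auto dest: interlace_length)
      have sn: "\<forall>i\<ge>Suc l. part mu i = 0" using mu unfolding S_def by auto
      have "W1 (y * t powi - int l) q p t (a * t ^ (2 * l)) (b * t ^ l) (sh k (Suc l) lam) (sh k l mu)
        = Xy p q a b k y * Bf p q t (b * t ^ l) k l
         * W1 (y * q powi - int k * t powi - int l) q p t (a * q ^ (2*k) * t ^ (2 * l)) (b * q ^ (2*k) * t ^ l) lam mu"
        by (rule KS'[OF mn len sl sn q0 t0 a0 nzb gy])
      then show ?thesis unfolding F_def G_def IH[OF mu] by (simp add: mult_ac)
    qed
    have finA: "finite {nu. interlace (sh k (Suc l) lam) nu}" by (rule finite_interlace)
    have finB: "finite {mu. interlace lam mu}" by (rule finite_interlace)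
    have img: "sh k l ` S \<subseteq> {nu. interlace (sh k (Suc l) lam) nu}"
    proof
      fix nu assume "nu \<in> sh k l ` S"
      then obtain mu where mu: "mu \<in> S" and nu: "nu = sh k l mu" by auto
      have len: "length mu = ?n" using mu unfolding S_def by (auto dest: interlace_length)
      have sn: "\<forall>i\<ge>Suc l. part mu i = 0" using mu unfolding S_def by auto
      show "nu \<in> {nu. interlace (sh k (Suc l) lam) nu}"
        using interlace_sh[of "Suc l" lam mu k] mn len sl sn mu nu unfolding S_def by simp
    qed
    have outside: "F nu = 0" if nu: "nu \<in> {nu. interlace (sh k (Suc l) lam) nu} - sh k l ` S" for nu
    proof (rule ccontr)
      assume nz: "F nu \<noteq> 0"
      then have "Wm (z # zs') q p t a b nu ?z \<noteq> 0" unfolding F_def by auto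
      then have sup: "\<forall>i>l. part nu i = 0" using Wm_support[of "z # zs'"] lz by blast
      have il: "interlace (sh k (Suc l) lam) nu" using nu by simp
      have len: "length nu = ?n" using il by (simp add: interlace_length)
      have ge: "nu ! i \<ge> k" if i: "i < l" "i < length nu" for i
      proof -
        have PL: "part (sh k (Suc l) lam) (Suc i + 1) = part lam (Suc i + 1) + int k"
          using part_sh[OF mn, of k "Suc i + 1"] i by simp
        have "Suc i \<in> {1..?n}" using i len by simp
        then have "part (sh k (Suc l) lam) (Suc i + 1) \<le> part nu (Suc i)" using il unfolding interlace_def by auto
        then have "int k \<le> part nu (Suc i)" using PL part_nonneg[of lam "Suc i + 1"] by simp
        then show ?thesis using i by (simp add: part_def)
      qed
      define mu where "mu = unsh k l nu"
      have shmu: "sh k l mu = nu" unfolding mu_def by (rule sh_unsh) (use ge in auto)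
      have lenmu: "length mu = ?n" using len unfolding mu_def unsh_def by simp
      have snmu: "\<forall>i\<ge>Suc l. part mu i = 0" using sup part_unsh[of l _ k nu] unfolding mu_def by auto
      have "interlace lam mu"
        using interlace_sh[of "Suc l" lam mu k] mn lenmu sl snmu il shmu by simp
      then have "mu \<in> S" unfolding S_def using snmu by auto
      then show False using nu shmu by auto
    qed
    have outsideG: "G mu = 0" if mu: "mu \<in> {mu. interlace lam mu} - S" for mu
    proof (rule ccontr)
      assume nz: "G mu \<noteq> 0"
      then have "Wm (map ?f (z # zs')) q p t (a * q ^ (2*k)) (b * q ^ (2*k)) mu ?z \<noteq> 0" unfolding G_def by auto
      then have "\<forall>i>l. part mu i = 0" using Wm_support[of "map ?f (z # zs')"] lz by simp
      then show False using mu unfolding S_def by auto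
    qed
    have "(\<Sum>nu\<in>{nu. interlace (sh k (Suc l) lam) nu}. F nu) = (\<Sum>nu\<in>sh k l ` S. F nu)"
      using sum.mono_neutral_right[OF finA img] outside by auto
    also have "\<dots> = (\<Sum>mu\<in>S. F (sh k l mu))"
      by (rule sum.reindex[OF inj_on_subset[OF inj_sh subset_UNIV], unfolded comp_def])
    also have "\<dots> = (\<Sum>mu\<in>S. (Xy p q a b k y * Bf p q t (b * t ^ l) k l * C) * G mu)"
      using termeq by (rule sum.cong[OF refl])
    also have "\<dots> = (Xy p q a b k y * Bf p q t (b * t ^ l) k l * C) * (\<Sum>mu\<in>S. G mu)"
      by (rule sum_distrib_left[symmetric])
    also have "(\<Sum>mu\<in>S. G mu) = (\<Sum>mu\<in>{mu. interlace lam mu}. G mu)"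
      proof -
      have "\<forall>mu\<in>{mu. interlace lam mu} - S. G mu = 0" using outsideG by blast
      from sum.mono_neutral_right[OF finB S_sub this] show ?thesis by simp
    qed
    finally have main: "(\<Sum>nu\<in>{nu. interlace (sh k (Suc l) lam) nu}. F nu)
      = (Xy p q a b k y * Bf p q t (b * t ^ l) k l * C) * (\<Sum>mu\<in>{mu. interlace lam mu}. G mu)" .
    have P1: "(\<Prod>i<length (y # zs). Xy p q a b k ((y # zs) ! i)) = Xy p q a b k y * (\<Prod>i<l. Xy p q a b k (zs ! i))"
      unfolding l_def by (simp only: length_Cons prod.lessThan_Suc_shift nth_Cons_0 nth_Cons_Suc)
    have P2: "(\<Prod>j<length (y # zs). Bf p q t (b * t ^ j) k j) = (\<Prod>j<l. Bf p q t (b * t ^ j) k j) * Bf p q t (b * t ^ l) k l"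
      unfolding l_def by simp
    show ?thesis unfolding LHS RHS main P1 P2 C_def by (simp add: mult_ac)
  qed
qed

lemma U_step:
  fixes c :: "int \<Rightarrow> complex"
  assumes nz: "\<And>s. c s \<noteq> 0"
  shows "(\<Prod>j<n. \<Prod>i\<in>{1..j}. c (int j + 1 - 2 * int i) / c (int j - 2 * int i))
       = (\<Prod>i\<in>{1..n-1}. c (int n - 2 * int i)) / (\<Prod>i\<in>{1..n-1}. c (- int i))"
proof (induction n)
  case 0 then show ?case by simp
next
  case (Suc n)
  show ?case
  proof (cases n)
    case 0 then show ?thesis by simp
  next
    case (Suc m)
    let ?N1 = "\<Prod>i\<in>{1..m}. c (int n - 2 * int i)"
    let ?D1 = "\<Prod>i\<in>{1..m}. c (- int i)"
    let ?N2 = "\<Prod>i\<in>{1..n}. c (int n + 1 - 2 * int i)"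
    have N1: "?N1 \<noteq> 0" using nz by simp
    have D1: "?D1 \<noteq> 0" using nz by simp
    have B: "(\<Prod>i\<in>{1..n}. c (int n + 1 - 2 * int i) / c (int n - 2 * int i))
        = ?N2 / (?N1 * c (- int n))"
      unfolding prod_dividef using Suc by simp
    have "(\<Prod>j<Suc n. \<Prod>i\<in>{1..j}. c (int j + 1 - 2 * int i) / c (int j - 2 * int i))
       = ?N1 / ?D1 * (?N2 / (?N1 * c (- int n)))"
      using Suc.IH Suc B by simp
    also have "\<dots> = ?N2 / (?D1 * c (- int n))" using N1 D1 nz by (simp add: field_simps)
    also have "\<dots> = (\<Prod>i\<in>{1..Suc n - 1}. c (int (Suc n) - 2 * int i)) / (\<Prod>i\<in>{1..Suc n-1}. c (- int i))"
      using Suc by simp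
    finally show ?thesis .
  qed
qed

lemma U_V:
  fixes c :: "int \<Rightarrow> complex"
  assumes nz: "\<And>s. c s \<noteq> 0"
  shows "(\<Prod>i\<in>{1..n-1}. c (int n - 2 * int i)) / (\<Prod>i\<in>{1..n-1}. c (- int i))
       = (\<Prod>j\<in>{1..n div 2}. c (int n - 2 * int j) / c (- 1 - int n + 2 * int j))"
proof (induction n rule: less_induct)
  case (less n)
  show ?case
  proof (cases n)
    case 0 then show ?thesis by simp
  next
    case (Suc n1)
    show ?thesis
    proof (cases n1)
      case 0 then show ?thesis using Suc by simp
    next
      case (Suc m)
      note n = \<open>n = Suc n1\<close> this
      have IH: "(\<Prod>i\<in>{1..m-1}. c (int m - 2 * int i)) / (\<Prod>i\<in>{1..m-1}. c (- int i))
         = (\<Prod>j\<in>{1..m div 2}. c (int m - 2 * int j) / c (- 1 - int m + 2 * int j))"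
        using less.IH[of m] n by simp
      have V: "(\<Prod>j\<in>{1..n div 2}. c (int n - 2 * int j) / c (- 1 - int n + 2 * int j))
         = c (int m) / c (-1 - int m) * (\<Prod>j\<in>{1..m div 2}. c (int m - 2 * int j) / c (- 1 - int m + 2 * int j))"
      proof -
        have nd: "n div 2 = Suc (m div 2)" using n by simp
        have a1: "int n - 2 * int (Suc j) = int m - 2 * int j" "- 1 - int n + 2 * int (Suc j) = - 1 - int m + 2 * int j" for j
          using n by simp_all
        have a2: "int n - 2 * int 1 = int m" "- 1 - int n + 2 * int 1 = - 1 - int m" using n by simp_all
        show ?thesis by (simp only: nd prod_first a1 a2)
      qed
      show ?thesis
      proof (cases m)
        case 0
        then show ?thesis using n by simp
      next
        case (Suc m')
        let ?N = "\<Prod>i\<in>{1..m'}. c (int m - 2 * int i)"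
        let ?D = "\<Prod>i\<in>{1..m'}. c (- int i)"
        have num: "(\<Prod>i\<in>{1..n-1}. c (int n - 2 * int i)) = c (int m) * ?N * c (- int m)"
        proof -
          have "(\<Prod>i\<in>{1..Suc (Suc m')}. c (int n - 2 * int i))
             = c (int n - 2) * (\<Prod>i\<in>{1..Suc m'}. c (int n - 2 * int (Suc i)))"
            unfolding prod_first by simp
          also have "(\<Prod>i\<in>{1..Suc m'}. c (int n - 2 * int (Suc i))) = ?N * c (int n - 2 * int (Suc (Suc m')))"
            using n Suc by (simp add: algebra_simps)
          finally show ?thesis using n Suc by (simp add: algebra_simps)
        qed
        have den: "(\<Prod>i\<in>{1..n-1}. c (- int i)) = ?D * c (- int m) * c (-1 - int m)"
          using n Suc by (simp add: algebra_simps)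
        have "(\<Prod>i\<in>{1..n-1}. c (int n - 2 * int i)) / (\<Prod>i\<in>{1..n-1}. c (- int i))
            = c (int m) / c (-1 - int m) * (?N / ?D)"
          unfolding num den using nz by (simp add: field_simps)
        also have "?N / ?D = (\<Prod>i\<in>{1..m-1}. c (int m - 2 * int i)) / (\<Prod>i\<in>{1..m-1}. c (- int i))"
          using Suc by simp
        finally show ?thesis unfolding V IH .
      qed
    qed
  qed
qed

lemma prod_single_powi:
  assumes j: "j < n"
  shows "(\<Prod>m<n. (xs ! m :: complex) powi ((replicate n 0)[j := e] ! m)) = (xs ! j) powi e"
proof -
  have "(\<Prod>m<n. (xs ! m) powi ((replicate n 0)[j := e] ! m)) = (\<Prod>m<n. if m = j then (xs ! j) powi e else 1)"
    by (rule prod.cong) (auto simp: nth_list_update)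
  also have "\<dots> = (xs ! j) powi e" using j by (simp add: prod.delta)
  finally show ?thesis .
qed

lemma gen_H:
  assumes g: "generic p q t a b xs" and r: "length r = length xs"
    and nz: "(i, j, k, l, r) \<noteq> (0, 0, 0, 0, replicate (length xs) 0)"
  shows "E p (q powi i * t powi j * a powi k * b powi l * (\<Prod>m<length xs. (xs ! m) powi (r ! m))) \<noteq> 0"
proof -
  have "\<forall>(i::int) (j::int) (k::int) (l::int) (r::int list). length r = length xs \<longrightarrow>
        (i, j, k, l, r) \<noteq> (0, 0, 0, 0, replicate (length xs) 0) \<longrightarrow>
        E p (q powi i * t powi j * a powi k * b powi l * (\<Prod>m<length xs. (xs ! m) powi (r ! m))) \<noteq> 0"
    using g unfolding generic_def by (elim conjE) assumption
  from this[rule_format, OF r nz] show ?thesis .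
qed

lemma gen_basic:
  assumes g: "generic p q t a b xs"
  shows "q \<noteq> 0" "t \<noteq> 0" "a \<noteq> 0" "b \<noteq> 0" "\<forall>x\<in>set xs. x \<noteq> 0"
proof -
  have c: "q \<noteq> 0 \<and> t \<noteq> 0 \<and> a \<noteq> 0 \<and> b \<noteq> 0 \<and> (\<forall>x\<in>set xs. x \<noteq> 0)"
    using g unfolding generic_def by (elim conjE) (intro conjI; assumption)
  from c show "q \<noteq> 0" by blast
  from c show "t \<noteq> 0" by blast
  from c show "a \<noteq> 0" by blast
  from c show "b \<noteq> 0" by blast
  from c show "\<forall>x\<in>set xs. x \<noteq> 0" by blast
qed

lemma gen_x:
  assumes g: "generic p q t a b xs" and j: "j < length xs" and e: "e \<noteq> 0"
  shows "E p (q powi i * t powi jj * a powi kk * b powi ll * (xs ! j) powi e) \<noteq> 0"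
proof -
  let ?r = "(replicate (length xs) 0)[j := e]"
  have "length ?r = length xs" by simp
  moreover have "(i, jj, kk, ll, ?r) \<noteq> (0, 0, 0, 0, replicate (length xs) 0)"
  proof
    assume "(i, jj, kk, ll, ?r) = (0, 0, 0, 0, replicate (length xs) 0)"
    then have "?r ! j = replicate (length xs) 0 ! j" by simp
    then show False using j e by simp
  qed
  ultimately have "E p (q powi i * t powi jj * a powi kk * b powi ll * (\<Prod>m<length xs. (xs ! m) powi (?r ! m))) \<noteq> 0"
    by (rule gen_H[OF g])
  then show ?thesis using prod_single_powi[OF j] by simp
qed

lemma gen_0:
  assumes g: "generic p q t a b xs" and nz: "(i, jj, kk, ll) \<noteq> (0, 0, 0, 0)"
  shows "E p (q powi i * t powi jj * a powi kk * b powi ll) \<noteq> 0"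
proof -
  let ?r = "replicate (length xs) 0 :: int list"
  have nz5: "(i, jj, kk, ll, ?r) \<noteq> (0, 0, 0, 0, replicate (length xs) 0)" using nz by simp
  have "E p (q powi i * t powi jj * a powi kk * b powi ll * (\<Prod>m<length xs. (xs ! m) powi (?r ! m))) \<noteq> 0"
    using gen_H[OF g _ nz5] by simp
  then show ?thesis by simp
qed

lemma gen_gy:
  assumes g: "generic p q t a b xs" and y: "y \<in> set xs"
  shows "gy p q t a b y"
proof -
  obtain j where j: "j < length xs" and yj: "y = xs ! j" using y by (auto simp: in_set_conv_nth)
  have a0: "a \<noteq> 0" and y0: "y \<noteq> 0" using gen_basic[OF g] y by auto
  have "E p (1 / y * t powi s * q powi r) \<noteq> 0" for s r
    using gen_x[OF g j, of "-1" r s 0 0] yj by (simp add: power_int_minus_divide mult_ac)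
  moreover have "E p (a * y * t powi s * q powi r) \<noteq> 0" for s r
    using gen_x[OF g j, of 1 r s 1 0] yj by (simp add: mult_ac)
  moreover have "E p (b * y * t powi s * q powi r) \<noteq> 0" for s r
    using gen_x[OF g j, of 1 r s 0 1] yj by (simp add: mult_ac)
  moreover have "E p (b / (a * y) * t powi s * q powi r) \<noteq> 0" for s r
    using gen_x[OF g j, of "-1" r s "-1" 1] yj by (simp add: power_int_minus_divide mult_ac)
  ultimately show ?thesis using y0 unfolding gy_def by blast
qed

theorem mainTheorem6:
  fixes p q t a b :: complex and lam :: "nat list" and k :: nat and xs :: "complex list"
  assumes "norm p < 1"
    and "generic p q t a b xs"
    and "sorted_wrt (\<ge>) lam"
    and "lam \<noteq> []"
    and "last lam \<noteq> 0"
    and "k \<le> last lam"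
    and "length xs = length lam"
  shows "W xs q p t a b lam =
    (\<Prod>j\<in>{1..length lam div 2}.
        thpoch p q (q * b * t powi (int (length lam) - 2 * int j)) (2 * int k)
        / thpoch p q (q * b * t powi (- 1 - int (length lam) + 2 * int j)) (2 * int k))
    * (\<Prod>i<length lam.
        thpoch p q (1 / xs ! i) (int k) * thpoch p q (a * xs ! i) (int k)
        / (thpoch p q (q * b * xs ! i) (int k) * thpoch p q (q * b / (a * xs ! i)) (int k)))
    * W (map (\<lambda>x. x * q powi (- int k)) xs) q p t (a * q ^ (2 * k)) (b * q ^ (2 * k))
        (map (\<lambda>l. l - k) lam)"
proof -
  note g = assms(2)
  let ?n = "length lam"
  define lam0 where "lam0 = map (\<lambda>l. l - k) lam"
  have q0: "q \<noteq> 0" and t0: "t \<noteq> 0" and a0: "a \<noteq> 0" using gen_basic[OF g] by auto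
  have nzb: "E p (b * t powi s * q powi r) \<noteq> 0" for s r
    using gen_0[OF g, of r s 0 1] by (simp add: mult_ac)
  have gys: "\<forall>y\<in>set xs. gy p q t a b y" using gen_gy[OF g] by blast
  have ge: "lam ! i \<ge> k" if "i < ?n" for i
  proof -
    have "last lam = lam ! (?n - 1)" using assms(4) by (simp add: last_conv_nth)
    moreover have "lam ! (?n - 1) \<le> lam ! i"
    proof (cases "i = ?n - 1")
      case True then show ?thesis by simp
    next
      case False
      then have "i < ?n - 1" using that by simp
      then show ?thesis using assms(3) that by (simp add: sorted_wrt_iff_nth_less)
    qed
    ultimately show ?thesis using assms(6) by simp
  qed
  have shl: "sh k ?n lam0 = lam"
  proof (rule nth_equalityI)
    show "length (sh k ?n lam0) = length lam" by (simp add: lam0_def)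
    fix i assume "i < length (sh k ?n lam0)"
    then have i: "i < ?n" by (simp add: lam0_def)
    show "sh k ?n lam0 ! i = lam ! i" using ge[OF i] i by (simp add: sh_def lam0_def)
  qed
  have len0: "length lam0 = ?n" unfolding lam0_def by simp
  have ch: "Wm xs q p t a b (sh k (length xs) lam0) (replicate (length lam0) 0)
    = (\<Prod>i<length xs. Xy p q a b k (xs ! i)) * (\<Prod>j<length xs. Bf p q t (b * t ^ j) k j)
      * Wm (map (\<lambda>x. x * q powi - int k) xs) q p t (a * q ^ (2*k)) (b * q ^ (2*k)) lam0 (replicate (length lam0) 0)"
    by (rule chain[OF _ _ _ q0 t0 a0 nzb gys]) (use assms(4,7) len0 in \<open>auto simp: part_def\<close>)
  define c where "c s = thpoch p q (q * b * t powi s) (2 * int k)" for s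
  have cnz: "c s \<noteq> 0" for s
    unfolding c_def by (rule thnz[OF nzb q0, where s=s and r=1]) (auto simp: mult_ac)
  have Bfc: "Bf p q t (b * t ^ j) k j = (\<Prod>i\<in>{1..j}. c (int j + 1 - 2 * int i) / c (int j - 2 * int i))" for j
  proof -
    have e: "q * (b * t ^ j) * t powi u = q * b * t powi (int j + u)" for u
    proof -
      have "t powi (int j + u) = t ^ j * t powi u" using power_int_add[of t "int j" u] t0 by simp
      then show ?thesis by (simp add: mult_ac)
    qed
    show ?thesis unfolding Bf_def c_def e by (simp add: algebra_simps)
  qed
  have BV: "(\<Prod>j<?n. Bf p q t (b * t ^ j) k j)
      = (\<Prod>j\<in>{1..?n div 2}. c (int ?n - 2 * int j) / c (- 1 - int ?n + 2 * int j))"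
  proof -
    have "(\<Prod>j<?n. Bf p q t (b * t ^ j) k j) = (\<Prod>j<?n. \<Prod>i\<in>{1..j}. c (int j + 1 - 2 * int i) / c (int j - 2 * int i))"
      by (simp only: Bfc)
    also have "\<dots> = (\<Prod>i\<in>{1..?n-1}. c (int ?n - 2 * int i)) / (\<Prod>i\<in>{1..?n-1}. c (- int i))"
      by (rule U_step[OF cnz])
    also have "\<dots> = (\<Prod>j\<in>{1..?n div 2}. c (int ?n - 2 * int j) / c (- 1 - int ?n + 2 * int j))"
      by (rule U_V[OF cnz])
    finally show ?thesis .
  qed
  have ch2: "Wm xs q p t a b (sh k ?n lam0) (replicate ?n 0)
    = (\<Prod>i<?n. Xy p q a b k (xs ! i)) * (\<Prod>j\<in>{1..?n div 2}. c (int ?n - 2 * int j) / c (- 1 - int ?n + 2 * int j))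
      * Wm (map (\<lambda>x. x * q powi - int k) xs) q p t (a * q ^ (2*k)) (b * q ^ (2*k)) lam0 (replicate ?n 0)"
    using ch unfolding assms(7) len0 BV .
  have "W xs q p t a b lam = Wm xs q p t a b (sh k ?n lam0) (replicate ?n 0)"
    unfolding W_def shl ..
  also have "\<dots> = (\<Prod>i<?n. Xy p q a b k (xs ! i)) * (\<Prod>j\<in>{1..?n div 2}. c (int ?n - 2 * int j) / c (- 1 - int ?n + 2 * int j))
      * W (map (\<lambda>x. x * q powi - int k) xs) q p t (a * q ^ (2*k)) (b * q ^ (2*k)) lam0"
    unfolding ch2 W_def len0 ..
  finally show ?thesis unfolding c_def Xy_def lam0_def by (simp add: mult_ac)
qed

end
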